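(* Let $p\ge3$ be an integer. In $L^2(-1,1)$ with its standard inner product, the orthogonal complement of $(1-x^2)\mathbf P^{p-3}$ inside $\mathbf P^p$ is $$\{(1-x^2)\mathbf P^{p-3}\}^\perp\cap\mathbf P^p=\mathrm{Span}\{L_p,\,L_p',\,L_{p-1}'\}.$$
   Context: $\mathbf P^q$ denotes the real polynomials of degree at most $q$ on $[-1,1]$, and $(1-x^2)\mathbf P^{p-3}=\{(1-x^2)q: q\in\mathbf P^{p-3}\}$. $L_m$ are the Legendre polynomials ($L_0=1$, $L_1=x$, $(m+1)L_{m+1}=(2m+1)xL_m-mL_{m-1}$) and $L_m'$ their derivatives. *)

theory Defs
  imports "HOL-Analysis.Analysis" "HOL-Computational_Algebra.Polynomial"
begin

fun legendre :: "nat \<Rightarrow> real poly" where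
  "legendre 0 = 1"
| "legendre (Suc 0) = [:0, 1:]"
| "legendre (Suc (Suc m)) =
     smult (1 / (real m + 2))
       (smult (2 * real m + 3) ([:0, 1:] * legendre (Suc m)) - smult (real m + 1) (legendre m))"

definition L2_inner :: "real poly \<Rightarrow> real poly \<Rightarrow> real" where
  "L2_inner f g = integral {-1..1} (\<lambda>x. poly f x * poly g x)"

end

theory Submission
  imports Defs
begin

lemma cont_poly_prod: "continuous_on S (\<lambda>x. poly f x * poly g x :: real)"
  by (intro continuous_intros)

lemma int_poly: "(\<lambda>x. poly f x * poly g x :: real) integrable_on {-1..1}"
  by (intro integrable_continuous_interval cont_poly_prod)

lemma L2_add1: "L2_inner (f + g) h = L2_inner f h + L2_inner g h"
  unfolding L2_inner_def
  using integral_add[OF int_poly[of f h] int_poly[of g h]]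
  by (simp add: distrib_right)

lemma L2_smult1: "L2_inner (smult a f) h = a * L2_inner f h"
  unfolding L2_inner_def by (simp add: mult.assoc)

lemma L2_diff1: "L2_inner (f - g) h = L2_inner f h - L2_inner g h"
  using L2_add1[of f "-g" h] L2_smult1[of "-1" g h] by simp

lemma L2_sym: "L2_inner f g = L2_inner g f"
  unfolding L2_inner_def by (simp add: mult.commute)

lemma L2_add2: "L2_inner h (f + g) = L2_inner h f + L2_inner h g"
  using L2_add1 L2_sym by metis

lemma L2_smult2: "L2_inner h (smult a f) = a * L2_inner h f"
  using L2_smult1 L2_sym by metis

lemma L2_diff2: "L2_inner h (f - g) = L2_inner h f - L2_inner h g"
  using L2_diff1 L2_sym by metis

lemma L2_prod: "L2_inner f g = L2_inner 1 (f * g)"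
  unfolding L2_inner_def by simp

lemma FTC_poly: "L2_inner 1 (pderiv h) = poly h 1 - poly h (-1)"
proof -
  have d: "((\<lambda>x. poly h x) has_vector_derivative poly (pderiv h) x) (at x within {-1..1})" for x
    using poly_DERIV[of h x] has_field_derivative_at_within has_real_derivative_iff_has_vector_derivative by blast
  have "((\<lambda>x. poly (pderiv h) x) has_integral poly h 1 - poly h (-1)) {-1..1}"
    by (rule fundamental_theorem_of_calculus) (use d in auto)
  then show ?thesis unfolding L2_inner_def by (simp add: integral_unique)
qed


lemma leg_rec: "smult (real n + 2) (legendre (Suc (Suc n))) =
  smult (2*real n+3) ([:0,1:] * legendre (Suc n)) - smult (real n + 1) (legendre n)"
  by (simp add: add.commute)

lemma leg_rec_pt: "(real n + 2) * poly (legendre (Suc (Suc n))) x =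
  (2*real n+3) * x * poly (legendre (Suc n)) x - (real n + 1) * poly (legendre n) x"
  using arg_cong[OF leg_rec[of n], of "\<lambda>p. poly p x"] by simp

lemma leg_rec_d: "(real n + 2) * poly (pderiv (legendre (Suc (Suc n)))) x =
  (2*real n+3) * (poly (legendre (Suc n)) x + x * poly (pderiv (legendre (Suc n))) x)
   - (real n + 1) * poly (pderiv (legendre n)) x"
  using arg_cong[OF leg_rec[of n], of "\<lambda>p. poly (pderiv p) x"]
  by (simp del: legendre.simps add: pderiv_smult pderiv_diff pderiv_mult pderiv_pCons algebra_simps)

lemma leg_ids: "(\<forall>x. poly (pderiv (legendre (Suc n))) x = x * poly (pderiv (legendre n)) x + (real n + 1) * poly (legendre n) x)
  \<and> (\<forall>x. x * poly (pderiv (legendre (Suc n))) x - poly (pderiv (legendre n)) x = (real n + 1) * poly (legendre (Suc n)) x)"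
proof (induction n)
  case 0
  then show ?case by (simp add: pderiv_pCons)
next
  case (Suc n)
  have A: "poly (pderiv (legendre (Suc (Suc n)))) x = x * poly (pderiv (legendre (Suc n))) x + (real (Suc n) + 1) * poly (legendre (Suc n)) x" for x
  proof -
    have h1: "poly (pderiv (legendre (Suc n))) x = x * poly (pderiv (legendre n)) x + (real n + 1) * poly (legendre n) x"
      using Suc by blast
    have h2: "x * poly (pderiv (legendre (Suc n))) x - poly (pderiv (legendre n)) x = (real n + 1) * poly (legendre (Suc n)) x"
      using Suc by blast
    have "(real n + 2) * poly (pderiv (legendre (Suc (Suc n)))) x = (real n + 2) * (x * poly (pderiv (legendre (Suc n))) x + (real (Suc n) + 1) * poly (legendre (Suc n)) x)"
      using leg_rec_d[of n x] h1 h2 by (simp add: algebra_simps) algebra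
    moreover have "real n + 2 \<noteq> 0" by simp
    ultimately show ?thesis using mult_left_cancel by blast
  qed
  have B: "x * poly (pderiv (legendre (Suc (Suc n)))) x - poly (pderiv (legendre (Suc n))) x = (real (Suc n) + 1) * poly (legendre (Suc (Suc n))) x" for x
  proof -
    have h1: "poly (pderiv (legendre (Suc n))) x = x * poly (pderiv (legendre n)) x + (real n + 1) * poly (legendre n) x"
      using Suc by blast
    have h2: "x * poly (pderiv (legendre (Suc n))) x - poly (pderiv (legendre n)) x = (real n + 1) * poly (legendre (Suc n)) x"
      using Suc by blast
    show ?thesis using A[of x] h1 h2 leg_rec_pt[of n x] by (simp add: algebra_simps) algebra
  qed
  show ?case using A B by blast
qed


definition Wp :: "real poly" where "Wp = [:1, 0, -1:]"
definition Aop :: "real poly \<Rightarrow> real poly" where "Aop f = pderiv (Wp * pderiv f)"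

lemma poly_Wp: "poly Wp x = 1 - x^2"
  by (simp add: Wp_def power2_eq_square)

lemma leg_W: "Wp * pderiv (legendre (Suc m)) = smult (real m + 1) (legendre m - [:0,1:] * legendre (Suc m))"
proof -
  have "poly (Wp * pderiv (legendre (Suc m))) x = poly (smult (real m + 1) (legendre m - [:0,1:] * legendre (Suc m))) x" for x
  proof -
    have h1: "poly (pderiv (legendre (Suc m))) x = x * poly (pderiv (legendre m)) x + (real m + 1) * poly (legendre m) x"
      using leg_ids[of m] by blast
    have h2: "x * poly (pderiv (legendre (Suc m))) x - poly (pderiv (legendre m)) x = (real m + 1) * poly (legendre (Suc m)) x"
      using leg_ids[of m] by blast
    show ?thesis using h1 h2 by (simp del: legendre.simps add: poly_Wp algebra_simps power2_eq_square) algebra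
  qed
  then show ?thesis using poly_eq_poly_eq_iff by blast
qed

lemma leg_ode: "Aop (legendre n) = smult (- (real n * (real n + 1))) (legendre n)"
proof (cases n)
  case 0
  then show ?thesis by (simp add: Aop_def)
next
  case (Suc m)
  have "Aop (legendre (Suc m)) = smult (real m + 1) (pderiv (legendre m) - legendre (Suc m) - [:0,1:] * pderiv (legendre (Suc m)))"
    unfolding Aop_def leg_W by (simp del: legendre.simps add: pderiv_smult pderiv_diff pderiv_mult pderiv_pCons algebra_simps)
  also have "\<dots> = smult (- (real (Suc m) * (real (Suc m) + 1))) (legendre (Suc m))"
  proof -
    have "poly (pderiv (legendre m) - legendre (Suc m) - [:0,1:] * pderiv (legendre (Suc m))) x = - (real m + 2) * poly (legendre (Suc m)) x" for x
    proof -
      have h1: "poly (pderiv (legendre (Suc m))) x = x * poly (pderiv (legendre m)) x + (real m + 1) * poly (legendre m) x"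
        using leg_ids[of m] by blast
      have h2: "x * poly (pderiv (legendre (Suc m))) x - poly (pderiv (legendre m)) x = (real m + 1) * poly (legendre (Suc m)) x"
        using leg_ids[of m] by blast
      show ?thesis using h2 by (simp del: legendre.simps add: algebra_simps)
    qed
    then have "pderiv (legendre m) - legendre (Suc m) - [:0,1:] * pderiv (legendre (Suc m)) = smult (- (real m + 2)) (legendre (Suc m))"
      using poly_eq_poly_eq_iff[of "pderiv (legendre m) - legendre (Suc m) - [:0,1:] * pderiv (legendre (Suc m))" "smult (- (real m + 2)) (legendre (Suc m))"]
      by (auto simp del: legendre.simps)
    then show ?thesis by (simp del: legendre.simps add: algebra_simps)
  qed
  finally show ?thesis using Suc by simp
qed

lemma Aop_selfadj: "L2_inner (Aop f) g = L2_inner f (Aop g)"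
proof -
  have e: "pderiv (Wp * (pderiv f * g - f * pderiv g)) = Aop f * g - f * Aop g"
    unfolding Aop_def by (simp add: pderiv_mult pderiv_diff algebra_simps)
  have "L2_inner (Aop f) g - L2_inner f (Aop g) = L2_inner 1 (Aop f * g - f * Aop g)"
    using L2_prod[of "Aop f" g] L2_prod[of f "Aop g"] L2_diff2 by metis
  also have "\<dots> = 0" unfolding e[symmetric] FTC_poly by (simp add: poly_Wp)
  finally show ?thesis by simp
qed


lemma Wp_monom: "Wp * monom c j = monom c j - monom c (j+2)"
proof -
  have "poly (Wp * monom c j) x = poly (monom c j - monom c (j+2)) x" for x
    by (simp add: poly_Wp poly_monom algebra_simps power2_eq_square)
  then show ?thesis using poly_eq_poly_eq_iff by blast
qed

lemma Aop_monom: "Aop (monom 1 k) = monom (real k * (real k - 1)) (k - 2) - monom (real k * (real k + 1)) k"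
proof (cases k)
  case 0
  then show ?thesis by (simp add: Aop_def pderiv_monom)
next
  case (Suc j)
  have "Aop (monom 1 k) = pderiv (monom (real k) j - monom (real k) (j+2))"
    unfolding Aop_def pderiv_monom Wp_monom using Suc by simp
  also have "\<dots> = monom (real k * (real k - 1)) (k - 2) - monom (real k * (real k + 1)) k"
  proof -
    have "pderiv (monom (real k) j - monom (real k) (j+2)) = monom (real j * real k) (j - 1) - monom (real (j+2) * real k) (j + 1)"
      by (simp only: pderiv_diff pderiv_monom) simp
    moreover have "real j * real k = real k * (real k - 1)" "real (j+2) * real k = real k * (real k + 1)"
      "j - 1 = k - 2" "j + 1 = k" using Suc by (simp_all add: algebra_simps)
    ultimately show ?thesis by simp
  qed
  finally show ?thesis .
qed

lemma mono_monom: "monom (c::real) j = smult c (monom 1 j)"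
  by (simp add: smult_monom)

lemma leg_mom: "k < n \<Longrightarrow> L2_inner (legendre n) (monom 1 k) = 0"
proof (induction k rule: less_induct)
  case (less k)
  define M where "M j = L2_inner (legendre n) (monom 1 j)" for j
  have e1: "L2_inner (legendre n) (Aop (monom 1 k)) = - (real n * (real n + 1) * M k)"
    unfolding Aop_selfadj[symmetric] leg_ode M_def L2_smult1 by simp
  have e2: "L2_inner (legendre n) (Aop (monom 1 k)) = real k * (real k - 1) * M (k - 2) - real k * (real k + 1) * M k"
    unfolding Aop_monom L2_diff2 M_def
    by (subst (1 2) mono_monom) (simp add: L2_smult2)
  have e3: "real k * (real k - 1) * M (k - 2) = 0"
  proof (cases "k < 2")
    case True
    then have "k = 0 \<or> k = 1" by auto
    then show ?thesis by auto
  next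
    case False
    then have "M (k - 2) = 0" unfolding M_def using less by auto
    then show ?thesis by simp
  qed
  have "real n * (real n + 1) * M k = real k * (real k + 1) * M k"
    using e1 e2 e3 by linarith
  then have "(real n * (real n + 1) - real k * (real k + 1)) * M k = 0"
    by (simp add: algebra_simps)
  moreover have "real k * (real k + 1) < real n * (real n + 1)"
    using less.prems by (intro mult_strict_mono) auto
  ultimately show ?case unfolding M_def by simp
qed

lemma L2_sum2: "finite I \<Longrightarrow> L2_inner h (\<Sum>i\<in>I. f i) = (\<Sum>i\<in>I. L2_inner h (f i))"
  by (induction I rule: finite_induct) (simp_all add: L2_add2, simp add: L2_inner_def)

lemma leg_orth: "degree g < n \<Longrightarrow> L2_inner (legendre n) g = 0"
proof -
  assume d: "degree g < n"
  have "L2_inner (legendre n) g = L2_inner (legendre n) (\<Sum>i\<le>degree g. smult (coeff g i) (monom 1 i))"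
    using poly_as_sum_of_monoms[of g] by (simp add: smult_monom)
  also have "\<dots> = (\<Sum>i\<le>degree g. coeff g i * L2_inner (legendre n) (monom 1 i))"
    by (simp add: L2_sum2 L2_smult2)
  also have "\<dots> = 0" using d by (intro sum.neutral) (auto simp: leg_mom)
  finally show ?thesis .
qed


lemma leg_deg_aux: "degree (legendre n) \<le> n \<and> coeff (legendre n) n > 0"
proof (induction n rule: legendre.induct)
  case 1
  then show ?case by simp
next
  case 2
  then show ?case by simp
next
  case (3 m)
  let ?X = "[:0,1::real:]"
  have dX: "degree (?X * legendre (Suc m)) \<le> Suc (Suc m)"
    using degree_mult_le[of ?X "legendre (Suc m)"] 3 by simp
  have cX: "coeff (?X * legendre (Suc m)) (Suc (Suc m)) = coeff (legendre (Suc m)) (Suc m)"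
    by (simp add: coeff_pCons)
  have c0: "coeff (legendre m) (Suc (Suc m)) = 0"
    using 3 by (intro coeff_eq_0) simp
  have d: "degree (legendre (Suc (Suc m))) \<le> Suc (Suc m)"
  proof -
    have a: "degree (smult (2 * real m + 3) (?X * legendre (Suc m))) \<le> Suc (Suc m)"
      using degree_smult_le[of "2 * real m + 3" "?X * legendre (Suc m)"] dX by linarith
    have b: "degree (smult (real m + 1) (legendre m)) \<le> Suc (Suc m)"
      using degree_smult_le[of "real m + 1" "legendre m"] 3 by linarith
    have "degree (smult (2 * real m + 3) (?X * legendre (Suc m)) - smult (real m + 1) (legendre m)) \<le> Suc (Suc m)"
      using degree_diff_le[OF a b] .
    then show ?thesis unfolding legendre.simps(3)
      using degree_smult_le order.trans by blast
  qed
  have "coeff (legendre (Suc (Suc m))) (Suc (Suc m)) = (2 * real m + 3) / (real m + 2) * coeff (legendre (Suc m)) (Suc m)"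
    unfolding legendre.simps(3) coeff_smult coeff_diff cX c0 by simp
  moreover have "(2 * real m + 3) / (real m + 2) > 0" by simp
  ultimately show ?case using d 3 by simp
qed

lemma leg_deg: "degree (legendre n) = n" and leg_lc: "coeff (legendre n) n \<noteq> 0"
proof -
  show "coeff (legendre n) n \<noteq> 0" using leg_deg_aux[of n] by simp
  then have "n \<le> degree (legendre n)" by (rule le_degree)
  then show "degree (legendre n) = n" using leg_deg_aux[of n] by simp
qed

lemma ibp: "L2_inner (pderiv f) (Wp * q) = - L2_inner f (pderiv (Wp * q))"
proof -
  have "L2_inner 1 (pderiv (f * (Wp * q))) = 0" unfolding FTC_poly by (simp add: poly_Wp)
  moreover have "L2_inner 1 (pderiv (f * (Wp * q))) = L2_inner f (pderiv (Wp * q)) + L2_inner (pderiv f) (Wp * q)"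
    by (simp add: pderiv_mult L2_add2 L2_prod[symmetric] L2_sym[of "Wp * q"] del: mult_1)
  ultimately show ?thesis by simp
qed

lemma degree_Wq: "degree (Wp * q) \<le> degree q + 2"
  using degree_mult_le[of Wp q] by (simp add: Wp_def)


lemma orth_basis:
  assumes p: "p \<ge> 3" and q: "degree q \<le> p - 3"
  shows "L2_inner (legendre p) (Wp * q) = 0" "L2_inner (pderiv (legendre p)) (Wp * q) = 0"
        "L2_inner (pderiv (legendre (p - 1))) (Wp * q) = 0"
proof -
  have d1: "degree (Wp * q) < p" using degree_Wq[of q] p q by linarith
  have d2: "degree (pderiv (Wp * q)) < p - 1" using degree_Wq[of q] p q unfolding degree_pderiv by linarith
  show "L2_inner (legendre p) (Wp * q) = 0" using leg_orth d1 by blast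
  show "L2_inner (pderiv (legendre p)) (Wp * q) = 0" unfolding ibp using leg_orth[of _ p] d2 by simp
  show "L2_inner (pderiv (legendre (p - 1))) (Wp * q) = 0" unfolding ibp using leg_orth[OF d2] by simp
qed

lemma orth_self: assumes "L2_inner r (Wp * r) = 0" shows "r = 0"
proof (rule ccontr)
  assume nz: "r \<noteq> 0"
  let ?g = "\<lambda>x. poly r x * poly (Wp * r) x"
  have "(?g has_integral 0) (cbox (-1) 1)"
    using assms int_poly[of r "Wp * r"] unfolding L2_inner_def
    by (metis cbox_interval has_integral_integral)
  note hi = this
  have c: "continuous_on (cbox (- 1) 1) ?g" by (rule cont_poly_prod)
  have nn: "0 \<le> ?g x" if "x \<in> box (- 1) 1" for x
  proof -
    have "x^2 \<le> 1" using that by (auto simp add: box_real abs_square_le_1)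
    then have "0 \<le> (1 - x^2) * (poly r x)^2" by simp
    then show ?thesis by (simp add: poly_Wp power2_eq_square algebra_simps)
  qed
  have ne: "box (- 1) (1::real) \<noteq> {}" by (simp add: box_real)
  have z: "?g x = 0" if "x \<in> {-1..1}" for x
    using has_integral_0_cbox_imp_0[of "-1" 1 ?g x, OF c nn hi ne] that by simp
  have "{-1<..<(1::real)} \<subseteq> {x. poly r x = 0}"
  proof
    fix x :: real assume x: "x \<in> {-1<..<1}"
    then have "x^2 < 1" by (auto simp add: abs_square_less_1)
    moreover have "(1 - x^2) * (poly r x)^2 = 0" using z[of x] x by (simp add: poly_Wp power2_eq_square algebra_simps)
    ultimately show "x \<in> {x. poly r x = 0}" by simp
  qed
  moreover have "infinite {-1<..<(1::real)}" by simp
  ultimately show False using poly_roots_finite[OF nz] finite_subset by blast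
qed


lemma red_step:
  assumes "degree g \<le> n" "degree h \<le> n" "coeff h n \<noteq> (0::real)"
  shows "degree (g - smult (coeff g n / coeff h n) h) \<le> n - 1"
proof (rule degree_le, intro allI impI)
  fix i assume i: "n - 1 < i"
  let ?d = "g - smult (coeff g n / coeff h n) h"
  have dd: "degree ?d \<le> n"
    using degree_diff_le[OF assms(1) order.trans[OF degree_smult_le assms(2)]] .
  show "coeff ?d i = 0"
  proof (cases "i = n")
    case True
    then show ?thesis using assms(3) by simp
  next
    case False
    then have "i > degree ?d" using i dd by linarith
    then show ?thesis by (rule coeff_eq_0)
  qed
qed

theorem lemma12:
  fixes p :: nat
  assumes "p \<ge> 3"
  shows "{f :: real poly. degree f \<le> p \<and>
            (\<forall>q :: real poly. degree q \<le> p - 3 \<longrightarrow> L2_inner f ([:1, 0, -1:] * q) = 0)}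
       = {smult a (legendre p) + smult b (pderiv (legendre p)) + smult c (pderiv (legendre (p - 1)))
            | a b c :: real. True}"
proof -
  have W: "[:1, 0, -1:] = Wp" by (simp add: Wp_def)
  define L1 where "L1 = legendre p"
  define L2 where "L2 = pderiv (legendre p)"
  define L3 where "L3 = pderiv (legendre (p - 1))"
  have dL1: "degree L1 = p" unfolding L1_def by (rule leg_deg)
  have dL2: "degree L2 = p - 1" unfolding L2_def degree_pderiv leg_deg ..
  have dL3: "degree L3 = p - 2" unfolding L3_def degree_pderiv leg_deg by simp
  have cL1: "coeff L1 p \<noteq> 0" unfolding L1_def by (rule leg_lc)
  have cL2: "coeff L2 (p - 1) \<noteq> 0"
  proof -
    have "Suc (p - 1) = p" using assms by simp
    then show ?thesis unfolding L2_def coeff_pderiv using leg_lc[of p] by simp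
  qed
  have cL3: "coeff L3 (p - 2) \<noteq> 0"
  proof -
    have "Suc (p - 2) = p - 1" using assms by simp
    then show ?thesis unfolding L3_def coeff_pderiv using leg_lc[of "p - 1"] by simp
  qed
  have o1: "L2_inner L1 (Wp * q) = 0" and o2: "L2_inner L2 (Wp * q) = 0" and o3: "L2_inner L3 (Wp * q) = 0"
    if "degree q \<le> p - 3" for q
    unfolding L1_def L2_def L3_def using orth_basis[OF assms that] by auto
  have "{f. degree f \<le> p \<and> (\<forall>q. degree q \<le> p - 3 \<longrightarrow> L2_inner f (Wp * q) = 0)}
     = {smult a L1 + smult b L2 + smult c L3 | a b c :: real. True}"
  proof (intro equalityI subsetI)
    fix f assume "f \<in> {f. degree f \<le> p \<and> (\<forall>q. degree q \<le> p - 3 \<longrightarrow> L2_inner f (Wp * q) = 0)}"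
    then have df: "degree f \<le> p" and of: "\<And>q. degree q \<le> p - 3 \<Longrightarrow> L2_inner f (Wp * q) = 0" by auto
    define a0 where "a0 = coeff f p / coeff L1 p"
    define f1 where "f1 = f - smult a0 L1"
    have df1: "degree f1 \<le> p - 1" unfolding f1_def a0_def
      by (rule red_step) (use df dL1 cL1 in auto)
    define b0 where "b0 = coeff f1 (p - 1) / coeff L2 (p - 1)"
    define f2 where "f2 = f1 - smult b0 L2"
    have df2: "degree f2 \<le> p - 1 - 1" unfolding f2_def b0_def
      by (rule red_step) (use df1 dL2 cL2 in auto)
    define c0 where "c0 = coeff f2 (p - 2) / coeff L3 (p - 2)"
    define r where "r = f2 - smult c0 L3"
    have "degree r \<le> p - 2 - 1" unfolding r_def c0_def
      by (rule red_step) (use df2 dL3 cL3 in auto)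
    then have dr: "degree r \<le> p - 3" by simp
    have rf: "r = f - smult a0 L1 - smult b0 L2 - smult c0 L3" unfolding r_def f2_def f1_def by simp
    have "L2_inner r (Wp * r) = 0"
      apply (subst (1) rf) unfolding L2_diff1 L2_smult1 using of[OF dr] o1[OF dr] o2[OF dr] o3[OF dr] by simp
    then have "r = 0" by (rule orth_self)
    then have "f = smult a0 L1 + smult b0 L2 + smult c0 L3" using rf by (simp add: algebra_simps)
    then show "f \<in> {smult a L1 + smult b L2 + smult c L3 | a b c :: real. True}" by blast
  next
    fix f assume "f \<in> {smult a L1 + smult b L2 + smult c L3 | a b c :: real. True}"
    then obtain a b c where f: "f = smult a L1 + smult b L2 + smult c L3" by blast
    have "degree (smult a L1) \<le> p" using degree_smult_le[of a L1] dL1 by simp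
    moreover have "degree (smult b L2) \<le> p" using degree_smult_le[of b L2] dL2 by simp
    moreover have "degree (smult c L3) \<le> p" using degree_smult_le[of c L3] dL3 by simp
    ultimately have "degree f \<le> p" unfolding f by (intro degree_add_le) auto
    moreover have "L2_inner f (Wp * q) = 0" if "degree q \<le> p - 3" for q
      unfolding f L2_add1 L2_smult1 using o1[OF that] o2[OF that] o3[OF that] by simp
    ultimately show "f \<in> {f. degree f \<le> p \<and> (\<forall>q. degree q \<le> p - 3 \<longrightarrow> L2_inner f (Wp * q) = 0)}"
      by blast
  qed
  then show ?thesis unfolding W L2_def L3_def L1_def .
qed

end
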